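(* Let $G\in\mathcal{M}_k(n,s)$ and let $\mathrm{Sh}(G)$ be any $k$-graph obtained from $G$ by a finite sequence of shifts $\mathrm{sh}_{ij}$ (with $i<j$) which is invariant under all shifts, i.e. $\mathrm{sh}_{ij}(\mathrm{Sh}(G))=\mathrm{Sh}(G)$ for all vertices $i<j$. Then: (i) $\mathrm{Sh}(G)\in\mathcal{M}_k(n,s)$; (ii) if $n\neq 2k$ and $\mathrm{Sh}(G)\in\mathrm{Cov}_k(n,s)$, then $G\in\mathrm{Cov}_k(n,s)$; (iii) if $n\neq 2k$ and $\mathrm{Sh}(G)\in\mathrm{Cl}_k(n,s)$, then $G\in\mathrm{Cl}_k(n,s)$.
   Context: A $k$-uniform hypergraph ($k$-graph) $G=(V,E)$ consists of a finite vertex set $V\subseteq\mathbb{N}$ and a family $E$ of $k$-element subsets of $V$ (edges). A matching is a family of pairwise disjoint edges; $\mu(G)$ is the size of a largest matching in $G$. Let $\mathcal{H}_k(n,s)$ be the set of all $k$-graphs $G=(V,E)$ with $|V|=n$ and $\mu(G)=s$; let $\mu_k(n,s)=\max\{|E(G)|: G\in\mathcal{H}_k(n,s)\}$ and $\mathcal{M}_k(n,s)=\{G\in\mathcal{H}_k(n,s): |E(G)|=\mu_k(n,s)\}$. $\mathrm{Cov}_k(n,s)$ is the family of $k$-graphs $G=(V,E)$ with $|V|=n$ such that for some $S\subseteq V$ with $|S|=s$, $E=\{e\subseteq V: |e|=k,\ e\cap S\neq\emptyset\}$. $\mathrm{Cl}_k(n,s)$ is the family of $k$-graphs $G=(V,E)$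 with $|V|=n$ such that for some $T\subseteq V$ with $|T|=ks+k-1$, $E=\{e\subseteq T: |e|=k\}$. For vertices $i<j$, the $(i,j)$-shift $\mathrm{sh}_{ij}(G)$ is the $k$-graph on $V$ obtained from $G$ by replacing each edge $e\in E$ with $j\in e$, $i\notin e$ and $(e\setminus\{j\})\cup\{i\}\notin E$ by the set $(e\setminus\{j\})\cup\{i\}$ (all other edges are kept). *)

theory Defs
  imports Main
begin

type_synonym hgraph = "nat set \<times> nat set set"

definition kgraph :: "nat \<Rightarrow> hgraph \<Rightarrow> bool" where
  "kgraph k G \<longleftrightarrow> finite (fst G) \<and> (\<forall>e\<in>snd G. e \<subseteq> fst G \<and> card e = k)"

definition is_matching :: "nat set set \<Rightarrow> nat set set \<Rightarrow> bool" where
  "is_matching E M \<longleftrightarrow> M \<subseteq> E \<and> (\<forall>e\<in>M. \<forall>f\<in>M. e \<noteq> f \<longrightarrow> e \<inter> f = {})"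

definition mu :: "nat set set \<Rightarrow> nat" where
  "mu E = Max {card M | M. is_matching E M}"

definition Hk :: "nat \<Rightarrow> nat \<Rightarrow> nat \<Rightarrow> hgraph set" where
  "Hk k n s = {G. kgraph k G \<and> card (fst G) = n \<and> mu (snd G) = s}"

definition mu_k :: "nat \<Rightarrow> nat \<Rightarrow> nat \<Rightarrow> nat" where
  "mu_k k n s = Max {card (snd G) | G. G \<in> Hk k n s}"

definition Mk :: "nat \<Rightarrow> nat \<Rightarrow> nat \<Rightarrow> hgraph set" where
  "Mk k n s = {G \<in> Hk k n s. card (snd G) = mu_k k n s}"

definition Cov :: "nat \<Rightarrow> nat \<Rightarrow> nat \<Rightarrow> hgraph set" where
  "Cov k n s = {G. finite (fst G) \<and> card (fst G) = n \<and>
     (\<exists>S. S \<subseteq> fst G \<and> card S = s \<and>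
        snd G = {e. e \<subseteq> fst G \<and> card e = k \<and> e \<inter> S \<noteq> {}})}"

definition Cl :: "nat \<Rightarrow> nat \<Rightarrow> nat \<Rightarrow> hgraph set" where
  "Cl k n s = {G. finite (fst G) \<and> card (fst G) = n \<and>
     (\<exists>T. T \<subseteq> fst G \<and> card T = k * s + k - 1 \<and>
        snd G = {e. e \<subseteq> T \<and> card e = k})}"

definition shift :: "nat \<Rightarrow> nat \<Rightarrow> hgraph \<Rightarrow> hgraph" where
  "shift i j G = (fst G,
     (\<lambda>e. if j \<in> e \<and> i \<notin> e \<and> insert i (e - {j}) \<notin> snd G
          then insert i (e - {j}) else e) ` snd G)"

definition shifts :: "(nat \<times> nat) list \<Rightarrow> hgraph \<Rightarrow> hgraph" where
  "shifts ps G = fold (\<lambda>(i, j) H. shift i j H) ps G"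

end

theory Submission
  imports Defs
begin

definition tau :: "nat \<Rightarrow> nat \<Rightarrow> nat \<Rightarrow> nat" where
  "tau i j x = (if x = i then j else if x = j then i else x)"

lemma tau_tau[simp]: "tau i j (tau i j x) = x"
  by (auto simp: tau_def)

lemma mem_timg: "y \<in> tau i j ` A \<longleftrightarrow> tau i j y \<in> A"
  by (metis image_iff tau_tau)

lemma timg_timg[simp]: "tau i j ` (tau i j ` A) = A"
  by (auto simp: mem_timg)

lemma inj_tau: "inj (tau i j)"
  by (metis injI tau_tau)

lemma inj_timg: "inj ((`) (tau i j))"
  by (metis injI timg_timg)

lemma card_timg[simp]: "card (tau i j ` A) = card A"
  by (meson card_image inj_on_subset inj_tau subset_UNIV)

lemma timg_i: "i \<in> f \<Longrightarrow> j \<notin> f \<Longrightarrow> tau i j ` f = insert j (f - {i})"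
  by (auto simp: mem_timg tau_def split: if_splits)

lemma timg_j: "j \<in> f \<Longrightarrow> i \<notin> f \<Longrightarrow> tau i j ` f = insert i (f - {j})"
  by (auto simp: mem_timg tau_def split: if_splits)

lemma timg_same: "(i \<in> f \<longleftrightarrow> j \<in> f) \<Longrightarrow> tau i j ` f = f"
  by (auto simp: mem_timg tau_def split: if_splits)

lemma timg_V: "i \<in> V \<Longrightarrow> j \<in> V \<Longrightarrow> tau i j ` V = V"
  by (auto simp: mem_timg tau_def split: if_splits)

lemma fst_shift[simp]: "fst (shift i j H) = fst H"
  by (simp add: shift_def)

definition phi :: "nat \<Rightarrow> nat \<Rightarrow> nat set set \<Rightarrow> nat set \<Rightarrow> nat set" where
  "phi i j E e = (if j \<in> e \<and> i \<notin> e \<and> insert i (e - {j}) \<notin> E then insert i (e - {j}) else e)"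

lemma phi_no: "\<not> (j \<in> e \<and> i \<notin> e \<and> insert i (e - {j}) \<notin> E) \<Longrightarrow> phi i j E e = e"
  unfolding phi_def by (rule if_not_P)

lemma phi_yes: "j \<in> e \<and> i \<notin> e \<and> insert i (e - {j}) \<notin> E \<Longrightarrow> phi i j E e = insert i (e - {j})"
  unfolding phi_def by (rule if_P)

lemma snd_shift: "snd (shift i j H) = phi i j (snd H) ` snd H"
  by (simp add: shift_def phi_def)

lemma char:
  assumes "i \<noteq> j"
  shows "f \<in> snd (shift i j H) \<longleftrightarrow>
    (if i \<in> f \<and> j \<notin> f then f \<in> snd H \<or> tau i j ` f \<in> snd H
     else if j \<in> f \<and> i \<notin> f then f \<in> snd H \<and> tau i j ` f \<in> snd H
     else f \<in> snd H)"
proof -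
  let ?E = "snd H"
  have e1: "insert i (insert j (f - {i}) - {j}) = f" if "i \<in> f" "j \<notin> f" for f
    using that assms by auto
  have mem: "f \<in> snd (shift i j H) \<longleftrightarrow> (\<exists>e\<in>?E. f = phi i j ?E e)"
    by (auto simp: snd_shift)
  show ?thesis
  proof (cases "i \<in> f \<and> j \<notin> f")
    case True
    have "(\<exists>e\<in>?E. f = phi i j ?E e) \<longleftrightarrow> f \<in> ?E \<or> insert j (f - {i}) \<in> ?E"
    proof
      assume "\<exists>e\<in>?E. f = phi i j ?E e"
      then obtain e where e: "e \<in> ?E" "f = phi i j ?E e" by blast
      show "f \<in> ?E \<or> insert j (f - {i}) \<in> ?E"
      proof (cases "j \<in> e \<and> i \<notin> e \<and> insert i (e - {j}) \<notin> ?E")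
        case True
        then have "f = insert i (e - {j})" using e by (simp add: phi_def)
        then have "insert j (f - {i}) = e" using True assms by auto
        then show ?thesis using e by simp
      next
        case False
        then have "f = e" using e phi_no by metis
        then show ?thesis using e by simp
      qed
    next
      assume h: "f \<in> ?E \<or> insert j (f - {i}) \<in> ?E"
      show "\<exists>e\<in>?E. f = phi i j ?E e"
      proof (cases "f \<in> ?E")
        case True
        then show ?thesis using \<open>i \<in> f \<and> j \<notin> f\<close> by (intro bexI[of _ f]) (auto simp: phi_def)
      next
        case False
        then have "insert j (f - {i}) \<in> ?E" using h by simp
        moreover have "phi i j ?E (insert j (f - {i})) = f"
          using False \<open>i \<in> f \<and> j \<notin> f\<close> assms e1 by (auto simp: phi_def)
        ultimately show ?thesis by metis
      qed
    qed
    then show ?thesis using True mem by (simp add: timg_i)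
  next
    case False
    have "(\<exists>e\<in>?E. f = phi i j ?E e) \<longleftrightarrow> f \<in> ?E \<and> (j \<in> f \<and> i \<notin> f \<longrightarrow> insert i (f - {j}) \<in> ?E)"
    proof
      assume "\<exists>e\<in>?E. f = phi i j ?E e"
      then obtain e where e: "e \<in> ?E" "f = phi i j ?E e" by blast
      show "f \<in> ?E \<and> (j \<in> f \<and> i \<notin> f \<longrightarrow> insert i (f - {j}) \<in> ?E)"
      proof (cases "j \<in> e \<and> i \<notin> e \<and> insert i (e - {j}) \<notin> ?E")
        case True
        then have "f = insert i (e - {j})" using e by (simp add: phi_def)
        then have "i \<in> f \<and> j \<notin> f" using True assms by auto
        then show ?thesis using False by simp
      next
        case c: False
        then have "f = e" using e phi_no by metis
        then show ?thesis using e c by auto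
      qed
    next
      assume h: "f \<in> ?E \<and> (j \<in> f \<and> i \<notin> f \<longrightarrow> insert i (f - {j}) \<in> ?E)"
      then have "phi i j ?E f = f" by (auto simp: phi_def)
      then show "\<exists>e\<in>?E. f = phi i j ?E e" using h by metis
    qed
    then show ?thesis using False mem assms by (auto simp: timg_j timg_same)
  qed
qed

lemma inj_phi:
  assumes "i \<noteq> j"
  shows "inj_on (phi i j E) E"
proof
  fix a b assume ab: "a \<in> E" "b \<in> E" "phi i j E a = phi i j E b"
  show "a = b"
  proof (cases "j \<in> a \<and> i \<notin> a \<and> insert i (a - {j}) \<notin> E")
    case ca: True
    show ?thesis
    proof (cases "j \<in> b \<and> i \<notin> b \<and> insert i (b - {j}) \<notin> E")
      case True
      then have "insert i (a - {j}) = insert i (b - {j})" using ab ca by (simp add: phi_def)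
      then have "insert j (insert i (a - {j}) - {i}) = insert j (insert i (b - {j}) - {i})" by simp
      moreover have "insert j (insert i (a - {j}) - {i}) = a" using ca assms by auto
      moreover have "insert j (insert i (b - {j}) - {i}) = b" using True assms by auto
      ultimately show ?thesis by simp
    next
      case False
      then have "phi i j E b = b" by (rule phi_no)
      then show ?thesis using ab ca phi_yes by metis
    qed
  next
    case ca: False
    then have "phi i j E a = a" by (rule phi_no)
    show ?thesis
    proof (cases "j \<in> b \<and> i \<notin> b \<and> insert i (b - {j}) \<notin> E")
      case True
      then have "a = insert i (b - {j})" using ab \<open>phi i j E a = a\<close> by (simp add: phi_def)
      then show ?thesis using True ab by simp
    next
      case False
      then show ?thesis using ab \<open>phi i j E a = a\<close> phi_no by metis
    qed
  qed
qed

lemma card_shift: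
  assumes "i \<noteq> j" shows "card (snd (shift i j H)) = card (snd H)"
  unfolding snd_shift using inj_phi[OF assms] by (simp add: card_image)


lemma matching_finite_set:
  assumes "finite E" shows "finite {card M | M. is_matching E M}"
proof -
  have "{card M | M. is_matching E M} \<subseteq> {..card E}"
    using assms by (auto simp: is_matching_def intro: card_mono)
  then show ?thesis by (rule finite_subset) simp
qed

lemma matching_empty: "is_matching E {}"
  by (simp add: is_matching_def)

lemma mu_ge: "finite E \<Longrightarrow> is_matching E M \<Longrightarrow> card M \<le> mu E"
  unfolding mu_def by (rule Max_ge) (auto simp: matching_finite_set)

lemma mu_obtain:
  assumes "finite E" obtains M where "is_matching E M" "card M = mu E"
proof -
  have "mu E \<in> {card M | M. is_matching E M}"
    unfolding mu_def using matching_finite_set[OF assms] matching_empty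
    by (intro Max_in) auto
  then obtain M where "is_matching E M" "card M = mu E" by auto
  then show ?thesis using that by blast
qed

lemma mu_le:
  assumes "finite E" "\<And>M. is_matching E M \<Longrightarrow> card M \<le> b"
  shows "mu E \<le> b"
proof -
  obtain M where M: "is_matching E M" "card M = mu E" using mu_obtain[OF assms(1)] by blast
  show ?thesis using assms(2)[OF M(1)] M(2) by simp
qed

lemma mu_mono: assumes "finite F" "E \<subseteq> F" shows "mu E \<le> mu F"
proof -
  obtain M where "is_matching E M" "card M = mu E"
    using mu_obtain[OF finite_subset[OF assms(2,1)]] by blast
  then have "is_matching F M" using assms(2) by (auto simp: is_matching_def)
  then show ?thesis using mu_ge[OF assms(1), of M] \<open>card M = mu E\<close> by simp
qed

lemma mu_remove:
  assumes "finite F" shows "mu F \<le> mu (F - {e}) + 1"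
proof -
  obtain M where M: "is_matching F M" "card M = mu F" using mu_obtain assms by blast
  have "is_matching (F - {e}) (M - {e})" using M(1) by (auto simp: is_matching_def)
  then have "card (M - {e}) \<le> mu (F - {e})" using assms by (intro mu_ge) auto
  moreover have "finite M" using M(1) assms by (auto simp: is_matching_def intro: finite_subset)
  then have "card M \<le> card (M - {e}) + 1"
    by (simp add: card_Diff_singleton_if) arith
  ultimately show ?thesis using M by simp
qed

lemma kgraph_finite: "kgraph k H \<Longrightarrow> finite (snd H)"
proof -
  assume "kgraph k H"
  then have "snd H \<subseteq> Pow (fst H)" "finite (fst H)" unfolding kgraph_def by auto
  then show ?thesis by (simp add: finite_subset)
qed

lemma disj_timg: "(tau i j ` a) \<inter> (tau i j ` b) = tau i j ` (a \<inter> b)"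
  by (simp add: image_Int[OF inj_tau])

lemma matching_shift:
  assumes ij: "i \<noteq> j" and M: "is_matching (snd (shift i j H)) M"
  shows "\<exists>M'. is_matching (snd H) M' \<and> card M' = card M"
proof (cases "M \<subseteq> snd H")
  case True
  then show ?thesis using M by (auto simp: is_matching_def)
next
  case False
  then obtain f where f: "f \<in> M" "f \<notin> snd H" by blast
  have fE': "f \<in> snd (shift i j H)" using f M by (auto simp: is_matching_def)
  have fi: "i \<in> f \<and> j \<notin> f"
    using fE' f char[OF ij, of f H] by (auto split: if_splits)
  have sub: "(`) (tau i j) ` M \<subseteq> snd H"
  proof
    fix x assume "x \<in> (`) (tau i j) ` M"
    then obtain h where h: "h \<in> M" "x = tau i j ` h" by blast
    have hE': "h \<in> snd (shift i j H)" using h M by (auto simp: is_matching_def)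
    show "x \<in> snd H"
    proof (cases "h = f")
      case True
      then show ?thesis using fE' f fi h char[OF ij, of f H] by simp
    next
      case False
      then have "h \<inter> f = {}" using M h f by (auto simp: is_matching_def)
      then have "i \<notin> h" using fi by auto
      then show ?thesis using hE' h char[OF ij, of h H] timg_same[of i h j]
        by (auto split: if_splits)
    qed
  qed
  have "is_matching (snd H) ((`) (tau i j) ` M)"
    unfolding is_matching_def
  proof (intro conjI sub ballI impI)
    fix x y assume "x \<in> (`) (tau i j) ` M" "y \<in> (`) (tau i j) ` M" "x \<noteq> y"
    then obtain a b where "a \<in> M" "b \<in> M" "x = tau i j ` a" "y = tau i j ` b" by blast
    then have "a \<noteq> b" "x \<inter> y = tau i j ` (a \<inter> b)" using \<open>x \<noteq> y\<close> by (auto simp: disj_timg)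
    then show "x \<inter> y = {}" using M \<open>a \<in> M\<close> \<open>b \<in> M\<close> by (simp add: is_matching_def)
  qed
  moreover have "card ((`) (tau i j) ` M) = card M"
    by (rule card_image[OF inj_on_subset[OF inj_timg subset_UNIV]])
  ultimately show ?thesis by (intro exI conjI)
qed

lemma mu_shift:
  assumes "i \<noteq> j" "finite (snd H)" "finite (snd (shift i j H))"
  shows "mu (snd (shift i j H)) \<le> mu (snd H)"
proof (rule mu_le[OF assms(3)])
  fix M assume "is_matching (snd (shift i j H)) M"
  then obtain M' where "is_matching (snd H) M'" "card M' = card M"
    using matching_shift[OF assms(1)] by blast
  then show "card M \<le> mu (snd H)" using mu_ge[OF assms(2)] by metis
qed


definition kall :: "nat set \<Rightarrow> nat \<Rightarrow> nat set set" where
  "kall V k = {f. f \<subseteq> V \<and> card f = k}"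

lemma finite_kall: "finite V \<Longrightarrow> finite (kall V k)"
  unfolding kall_def by (rule finite_subset[of _ "Pow V"]) auto

lemma kgraph_kall: "kgraph k H \<longleftrightarrow> finite (fst H) \<and> snd H \<subseteq> kall (fst H) k"
  unfolding kgraph_def kall_def by auto

lemma Hk_le_mu_k:
  assumes "G \<in> Hk k n s" shows "card (snd G) \<le> mu_k k n s"
proof -
  have fin: "finite {card (snd G) | G. G \<in> Hk k n s}"
  proof (rule finite_subset[of _ "{..2^n}"])
    show "{card (snd G) | G. G \<in> Hk k n s} \<subseteq> {..2^n}"
    proof
      fix x assume "x \<in> {card (snd G) | G. G \<in> Hk k n s}"
      then obtain G where G: "G \<in> Hk k n s" "x = card (snd G)" by blast
      then have "snd G \<subseteq> Pow (fst G)" "finite (fst G)" "card (fst G) = n"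
        by (auto simp: Hk_def kgraph_def)
      then have "card (snd G) \<le> 2 ^ n"
        by (metis card_Pow card_mono finite_Pow_iff)
      then show "x \<in> {..2^n}" using G by simp
    qed
  qed simp
  show ?thesis unfolding mu_k_def using assms by (intro Max_ge[OF fin]) blast
qed

lemma descend:
  assumes "finite F" "E0 \<subseteq> F" "mu E0 \<le> s" "s \<le> mu F"
  shows "\<exists>F'. E0 \<subseteq> F' \<and> F' \<subseteq> F \<and> mu F' = s"
  using assms
proof (induction "card F" arbitrary: F rule: less_induct)
  case less
  show ?case
  proof (cases "mu F = s")
    case True
    then show ?thesis using less by blast
  next
    case False
    then have "F \<noteq> E0" using less by auto
    then obtain e where e: "e \<in> F" "e \<notin> E0" using less by blast
    have "mu F \<le> mu (F - {e}) + 1" using mu_remove less by blast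
    then have "s \<le> mu (F - {e})" using False less by linarith
    moreover have "card (F - {e}) < card F" using card_Diff1_less[OF less.prems(1) e(1)] .
    moreover have "finite (F - {e})" "E0 \<subseteq> F - {e}" using less e by auto
    ultimately obtain F' where "E0 \<subseteq> F'" "F' \<subseteq> F - {e}" "mu F' = s"
      using less.hyps[of "F - {e}"] less.prems(3) by blast
    then show ?thesis by blast
  qed
qed

lemma kgraph_shift:
  assumes "kgraph k H" "i \<in> fst H"
  shows "kgraph k (shift i j H)"
proof -
  have "f \<subseteq> fst (shift i j H) \<and> card f = k" if "f \<in> snd (shift i j H)" for f
  proof -
  from that obtain e where e: "e \<in> snd H" "f = phi i j (snd H) e" by (auto simp: snd_shift)
  have ek: "e \<subseteq> fst H" "card e = k" "finite e" using e assms
    by (auto simp: kgraph_def intro: finite_subset)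
  show "f \<subseteq> fst (shift i j H) \<and> card f = k"
  proof (cases "j \<in> e \<and> i \<notin> e \<and> insert i (e - {j}) \<notin> snd H")
    case True
    then have "f = insert i (e - {j})" using e phi_yes by metis
    moreover have "card (insert i (e - {j})) = card e"
    proof -
      have "card e > 0" using True ek card_gt_0_iff by blast
      moreover have "card (e - {j}) = card e - 1" using True ek by simp
      ultimately show ?thesis using True ek by simp
    qed
    ultimately show ?thesis using ek assms True by auto
  next
    case False
    then have "f = e" using e phi_no by metis
    then show ?thesis using ek by simp
  qed
  qed
  then show ?thesis using assms by (simp add: kgraph_def)
qed

lemma step_Mk:
  assumes H: "H \<in> Mk k n s" and ij: "i \<in> fst H" "j \<in> fst H" "i \<noteq> j"
  shows "shift i j H \<in> Mk k n s"
proof -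
  let ?H' = "shift i j H"
  have kg: "kgraph k H" "card (fst H) = n" "mu (snd H) = s" "card (snd H) = mu_k k n s"
    using H by (auto simp: Mk_def Hk_def)
  have kg': "kgraph k ?H'" using kgraph_shift kg ij by blast
  have fin: "finite (snd H)" "finite (snd ?H')" using kg kg' kgraph_finite by blast+
  have card': "card (snd ?H') = mu_k k n s" using card_shift ij kg by simp
  have le: "mu (snd ?H') \<le> s" using mu_shift[OF ij(3) fin] kg by simp
  have eq: "mu (snd ?H') = s"
  proof (rule ccontr)
    assume "mu (snd ?H') \<noteq> s"
    then have lt: "mu (snd ?H') < s" using le by simp
    let ?F = "kall (fst H) k"
    have finF: "finite ?F" using kg finite_kall by (simp add: kgraph_def)
    have "snd H \<subseteq> ?F" using kg by (simp add: kgraph_kall)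
    then have "s \<le> mu ?F" using mu_mono[OF finF, of "snd H"] kg by simp
    moreover have "snd ?H' \<subseteq> ?F" using kg' by (simp add: kgraph_kall)
    ultimately obtain F' where F': "snd ?H' \<subseteq> F'" "F' \<subseteq> ?F" "mu F' = s"
      using descend[OF finF, of "snd ?H'" s] lt by auto
    have "(fst H, F') \<in> Hk k n s"
      using F' kg by (auto simp: Hk_def kgraph_kall)
    then have "card F' \<le> card (snd ?H')" using Hk_le_mu_k card' by fastforce
    moreover have "finite F'" using F' finF finite_subset by blast
    ultimately have "F' = snd ?H'" using F'(1) card_seteq[of F' "snd ?H'"] by auto
    then show False using F' lt by simp
  qed
  show ?thesis using kg' kg card' eq by (simp add: Mk_def Hk_def)
qed

lemma shifts_Cons: "shifts (p # ps) H = shifts ps (shift (fst p) (snd p) H)"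
  by (simp add: shifts_def split: prod.splits)

lemma shifts_Mk:
  "H \<in> Mk k n s \<Longrightarrow> \<forall>(i, j) \<in> set ps. i < j \<and> i \<in> fst H \<and> j \<in> fst H \<Longrightarrow> shifts ps H \<in> Mk k n s"
proof (induction ps arbitrary: H)
  case Nil
  then show ?case by (simp add: shifts_def)
next
  case (Cons p ps)
  obtain a b where p: "p = (a, b)" by force
  have "shift a b H \<in> Mk k n s" using Cons.prems p by (intro step_Mk) auto
  then show ?case using Cons p by (simp add: shifts_Cons)
qed


lemma mem_timgs: "x \<in> (`) (tau i j) ` A \<longleftrightarrow> tau i j ` x \<in> A"
proof
  assume "x \<in> (`) (tau i j) ` A"
  then obtain a where "a \<in> A" "x = tau i j ` a" by blast
  then show "tau i j ` x \<in> A" by simp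
next
  assume "tau i j ` x \<in> A"
  then show "x \<in> (`) (tau i j) ` A" using image_eqI[of x "(`) (tau i j)" "tau i j ` x"] by simp
qed

lemma side_i: "i \<noteq> j \<Longrightarrow> i \<in> x \<Longrightarrow> j \<notin> x \<Longrightarrow> j \<in> tau i j ` x \<and> i \<notin> tau i j ` x"
  by (auto simp: mem_timg tau_def)

lemma side_j: "i \<noteq> j \<Longrightarrow> j \<in> x \<Longrightarrow> i \<notin> x \<Longrightarrow> i \<in> tau i j ` x \<and> j \<notin> tau i j ` x"
  by (auto simp: mem_timg tau_def)

lemma recon:
  assumes ij: "i \<noteq> j"
    and flex: "\<And>f. i \<in> f \<Longrightarrow> j \<notin> f \<Longrightarrow> f \<in> snd (shift i j H) \<Longrightarrow> tau i j ` f \<notin> snd (shift i j H) \<Longrightarrow> f \<in> snd H"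
  shows "snd H = snd (shift i j H)"
proof (intro set_eqI)
  fix x
  let ?y = "tau i j ` x"
  have cx: "x \<in> snd (shift i j H) \<longleftrightarrow>
    (if i \<in> x \<and> j \<notin> x then x \<in> snd H \<or> ?y \<in> snd H
     else if j \<in> x \<and> i \<notin> x then x \<in> snd H \<and> ?y \<in> snd H
     else x \<in> snd H)" by (rule char[OF ij])
  have cy: "?y \<in> snd (shift i j H) \<longleftrightarrow>
    (if i \<in> ?y \<and> j \<notin> ?y then ?y \<in> snd H \<or> x \<in> snd H
     else if j \<in> ?y \<and> i \<notin> ?y then ?y \<in> snd H \<and> x \<in> snd H
     else ?y \<in> snd H)" using char[OF ij, of ?y H] by simp
  show "x \<in> snd H \<longleftrightarrow> x \<in> snd (shift i j H)"
  proof (cases "i \<in> x \<and> j \<notin> x")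
    case True
    then show ?thesis using cx cy side_i[OF ij] flex[of x] by auto
  next
    case F1: False
    show ?thesis
    proof (cases "j \<in> x \<and> i \<notin> x")
      case True
      then show ?thesis using cx cy side_j[OF ij] flex[of ?y] by auto
    next
      case False
      then show ?thesis using cx F1 by auto
    qed
  qed
qed

lemma recon2:
  assumes ij: "i \<noteq> j"
    and flex: "\<And>f. i \<in> f \<Longrightarrow> j \<notin> f \<Longrightarrow> f \<in> snd (shift i j H) \<Longrightarrow> tau i j ` f \<notin> snd (shift i j H) \<Longrightarrow> f \<notin> snd H"
  shows "snd H = (`) (tau i j) ` snd (shift i j H)"
proof (intro set_eqI)
  fix x
  let ?y = "tau i j ` x"
  have cx: "x \<in> snd (shift i j H) \<longleftrightarrow>
    (if i \<in> x \<and> j \<notin> x then x \<in> snd H \<or> ?y \<in> snd H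
     else if j \<in> x \<and> i \<notin> x then x \<in> snd H \<and> ?y \<in> snd H
     else x \<in> snd H)" by (rule char[OF ij])
  have cy: "?y \<in> snd (shift i j H) \<longleftrightarrow>
    (if i \<in> ?y \<and> j \<notin> ?y then ?y \<in> snd H \<or> x \<in> snd H
     else if j \<in> ?y \<and> i \<notin> ?y then ?y \<in> snd H \<and> x \<in> snd H
     else ?y \<in> snd H)" using char[OF ij, of ?y H] by simp
  show "x \<in> snd H \<longleftrightarrow> x \<in> (`) (tau i j) ` snd (shift i j H)"
    unfolding mem_timgs
  proof (cases "i \<in> x \<and> j \<notin> x")
    case True
    then show "x \<in> snd H \<longleftrightarrow> ?y \<in> snd (shift i j H)" using cx cy side_i[OF ij] flex[of x] by auto
  next
    case F1: False
    show "x \<in> snd H \<longleftrightarrow> ?y \<in> snd (shift i j H)"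
    proof (cases "j \<in> x \<and> i \<notin> x")
      case True
      then show ?thesis using cx cy side_j[OF ij] flex[of ?y] by auto
    next
      case False
      then have "?y = x" using F1 timg_same by blast
      then show ?thesis using cx F1 False by auto
    qed
  qed
qed

lemma part_matching:
  assumes "finite R" "m * k \<le> card R" "k \<ge> 1"
  shows "\<exists>M. card M = m \<and> (\<forall>e\<in>M. e \<subseteq> R \<and> card e = k) \<and> (\<forall>e\<in>M. \<forall>f\<in>M. e \<noteq> f \<longrightarrow> e \<inter> f = {})"
  using assms
proof (induction m arbitrary: R)
  case 0
  then show ?case by (intro exI[of _ "{}"]) simp
next
  case (Suc m)
  obtain e where e: "e \<subseteq> R" "card e = k" "finite e"
    using obtain_subset_with_card_n[of k R] Suc.prems by auto
  have "card (R - e) = card R - k" using e Suc.prems by (simp add: card_Diff_subset)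
  then have "m * k \<le> card (R - e)" using Suc.prems by simp
  then obtain M where M: "card M = m" "\<forall>x\<in>M. x \<subseteq> R - e \<and> card x = k" "\<forall>x\<in>M. \<forall>y\<in>M. x \<noteq> y \<longrightarrow> x \<inter> y = {}"
    using Suc.IH[of "R - e"] Suc.prems by auto
  have ne: "e \<noteq> {}" using e Suc.prems by auto
  have eM: "e \<notin> M" using M(2) ne by blast
  have fin: "finite M" using M(2) Suc.prems by (intro finite_subset[of M "Pow R"]) auto
  show ?case
  proof (intro exI[of _ "insert e M"] conjI)
    show "card (insert e M) = Suc m" using fin eM M by simp
    show "\<forall>x\<in>insert e M. x \<subseteq> R \<and> card x = k" using M e by auto
    show "\<forall>x\<in>insert e M. \<forall>y\<in>insert e M. x \<noteq> y \<longrightarrow> x \<inter> y = {}" using M by blast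
  qed
qed


lemma cover_matching:
  assumes "finite S'" "finite R" "S' \<inter> R = {}" "card S' * (k - 1) \<le> card R" "k \<ge> 1"
  shows "\<exists>M. card M = card S' \<and> (\<forall>e\<in>M. e \<subseteq> S' \<union> R \<and> card e = k \<and> e \<inter> S' \<noteq> {})
     \<and> (\<forall>e\<in>M. \<forall>f\<in>M. e \<noteq> f \<longrightarrow> e \<inter> f = {})"
  using assms
proof (induction S' arbitrary: R rule: finite_induct)
  case empty
  then show ?case by (intro exI[of _ "{}"]) simp
next
  case (insert x S)
  have "k - 1 \<le> card R" using insert.prems insert.hyps by simp
  then obtain A where A: "A \<subseteq> R" "card A = k - 1" "finite A"
    using obtain_subset_with_card_n[of "k - 1" R] by blast
  have xR: "x \<notin> R" using insert.prems by auto
  have "card (R - A) = card R - (k - 1)" using A insert.prems by (simp add: card_Diff_subset)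
  moreover have "card (insert x S) * (k - 1) = (k - 1) + card S * (k - 1)" using insert.hyps by simp
  ultimately have c: "card S * (k - 1) \<le> card (R - A)" using insert.prems by simp
  have d: "S \<inter> (R - A) = {}" using insert.prems by auto
  obtain M where M: "card M = card S" "\<forall>y\<in>M. y \<subseteq> S \<union> (R - A) \<and> card y = k \<and> y \<inter> S \<noteq> {}"
      "\<forall>y\<in>M. \<forall>z\<in>M. y \<noteq> z \<longrightarrow> y \<inter> z = {}"
    using insert.IH[OF finite_Diff[OF insert.prems(1)] d c insert.prems(4)] by blast
  let ?e = "insert x A"
  have xA: "x \<notin> A" using A xR by auto
  have "card ?e = Suc (k - 1)" using A(2,3) xA by simp
  then have ce: "card ?e = k" using insert.prems(4) by simp
  have eM: "?e \<notin> M"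
  proof
    assume eM': "?e \<in> M" have "?e \<subseteq> S \<union> (R - A)" using bspec[OF M(2) eM'] by (rule conjunct1)
    then have "x \<in> S \<union> (R - A)" by simp
    then show False using xR insert.hyps(2) by simp
  qed
  have "?e \<inter> (S \<union> (R - A)) = {}" using xR insert.hyps(2) A(1) insert.prems(2) by auto
  then have disj: "\<forall>y\<in>M. y \<inter> ?e = {}" using M(2) by (meson disjoint_iff subset_iff)
  have fin: "finite M" using M(2) insert.prems insert.hyps
    by (intro finite_subset[of M "Pow (S \<union> R)"]) auto
  show ?case
  proof (intro exI[of _ "insert ?e M"] conjI)
    show "card (insert ?e M) = card (insert x S)" using fin eM M insert.hyps by simp
    have "?e \<subseteq> insert x S \<union> R \<and> card ?e = k \<and> ?e \<inter> insert x S \<noteq> {}"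
      using ce A by auto
    moreover have "y \<subseteq> insert x S \<union> R \<and> card y = k \<and> y \<inter> insert x S \<noteq> {}" if "y \<in> M" for y
      using M(2) that by blast
    ultimately show "\<forall>y\<in>insert ?e M. y \<subseteq> insert x S \<union> R \<and> card y = k \<and> y \<inter> insert x S \<noteq> {}"
      by blast
    show "\<forall>y\<in>insert ?e M. \<forall>z\<in>insert ?e M. y \<noteq> z \<longrightarrow> y \<inter> z = {}"
      using M(3) disj by blast
  qed
qed

lemma combine:
  assumes "finite E" "M \<subseteq> E" "\<forall>e\<in>M. \<forall>f\<in>M. e \<noteq> f \<longrightarrow> e \<inter> f = {}"
    "f \<in> E" "g \<in> E" "f \<noteq> {}" "g \<noteq> {}" "f \<inter> g = {}" "\<forall>e\<in>M. e \<inter> f = {} \<and> e \<inter> g = {}"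
  shows "card M + 2 \<le> mu E"
proof -
  have fin: "finite M" using finite_subset[OF assms(2,1)] .
  have fM: "f \<notin> M"
  proof
    assume "f \<in> M" then have "f \<inter> f = {}" using assms(9) by blast
    then show False using assms(6) by simp
  qed
  have gM: "g \<notin> M"
  proof
    assume "g \<in> M" then have "g \<inter> g = {}" using assms(9) by blast
    then show False using assms(7) by simp
  qed
  have fg: "f \<noteq> g" using assms(6,8) by auto
  have "is_matching E (insert f (insert g M))"
    unfolding is_matching_def using assms by blast
  then have "card (insert f (insert g M)) \<le> mu E" using mu_ge[OF assms(1)] by blast
  moreover have "card (insert f (insert g M)) = card M + 2" using fin fM gM fg by simp
  ultimately show ?thesis by simp
qed

lemma kneser:
  assumes U: "finite U" "r = 0 \<or> 2*r+1 \<le> card U"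
    and P: "\<And>A B. A \<subseteq> U \<Longrightarrow> B \<subseteq> U \<Longrightarrow> card A = r \<Longrightarrow> card B = r \<Longrightarrow> A \<inter> B = {} \<Longrightarrow> Q A \<Longrightarrow> Q B"
    and AB: "A \<subseteq> U" "B \<subseteq> U" "card A = r" "card B = r" "Q A"
  shows "Q B"
proof -
  have finB: "finite B" using AB U finite_subset by blast
  have main: "\<forall>A. A \<subseteq> U \<longrightarrow> card A = r \<longrightarrow> card (A - B) = d \<longrightarrow> Q A \<longrightarrow> Q B" for d
  proof (induction d)
    case 0
    show ?case
    proof (intro allI impI)
      fix A assume h: "A \<subseteq> U" "card A = r" "card (A - B) = 0" "Q A"
      have finA: "finite A" using h U finite_subset by blast
      then have "A \<subseteq> B" using h by auto
      then have "A = B" using card_subset_eq[OF finB] h AB by simp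
      then show "Q B" using h by simp
    qed
  next
    case (Suc d)
    show ?case
    proof (intro allI impI)
      fix A assume h: "A \<subseteq> U" "card A = r" "card (A - B) = Suc d" "Q A"
      have finA: "finite A" using h U finite_subset by blast
      have "A - B \<noteq> {}"
      proof
        assume "A - B = {}" then have "card (A - B) = 0" by (simp only: card.empty)
        then show False using h(3) by simp
      qed
      then obtain a where a: "a \<in> A" "a \<notin> B" by blast
      have "\<not> B \<subseteq> A"
      proof
        assume "B \<subseteq> A"
        then have "B = A" using card_subset_eq[OF finA] h AB by simp
        then show False using a by simp
      qed
      then obtain b where b: "b \<in> B" "b \<notin> A" by blast
      have "card A > 0" using a finA card_gt_0_iff by blast
      then have r1: "r \<ge> 1" using h by simp
      then have cU: "2*r+1 \<le> card U" using U by simp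
      let ?A' = "insert b (A - {a})"
      have cA': "card ?A' = r" using finA a b h r1 by (simp add: card_Diff_singleton_if)
      have A'U: "?A' \<subseteq> U" using h b AB by auto
      have "?A' - B = (A - B) - {a}" using b by auto
      then have dA': "card (?A' - B) = d" using h a finA by (simp add: card_Diff_singleton_if)
      have "card (insert b A) = r + 1" using finA b h by simp
      moreover have "insert b A \<subseteq> U" using h b AB by auto
      ultimately have "card (U - insert b A) = card U - (r + 1)"
        using finA by (simp add: card_Diff_subset)
      then have "r \<le> card (U - insert b A)" using cU by simp
      then obtain C where C: "C \<subseteq> U - insert b A" "card C = r"
        using obtain_subset_with_card_n by metis
      have "Q C" using P[of A C] C h by auto
      then have "Q ?A'" using P[of C ?A'] C cA' A'U by auto
      then show "Q B" using Suc.IH A'U cA' dA' by blast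
    qed
  qed
  show ?thesis using main[of "card (A - B)"] AB by blast
qed

lemma match_card_bound:
  assumes "kgraph k H" "is_matching (snd H) M"
  shows "card M * k \<le> card (fst H)"
proof -
  have sub: "\<Union>M \<subseteq> fst H" "\<forall>e\<in>M. card e = k \<and> finite e"
    using assms by (auto simp: kgraph_def is_matching_def intro: finite_subset)
  have pw: "pairwise disjnt M" using assms(2) by (auto simp: is_matching_def pairwise_def disjnt_def)
  have "card (\<Union>M) = sum card M" using card_Union_disjoint[OF pw] sub by blast
  also have "\<dots> = card M * k" using sub by simp
  finally have "card M * k = card (\<Union>M)" by simp
  also have "\<dots> \<le> card (fst H)" using sub assms by (intro card_mono) (auto simp: kgraph_def)
  finally show ?thesis .
qed

lemma Mk_complete:
  assumes H: "H \<in> Mk k n s" and lt: "n < k * (s + 1)"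
  shows "snd H = kall (fst H) k"
proof -
  have kg: "kgraph k H" "card (fst H) = n" "mu (snd H) = s" "card (snd H) = mu_k k n s"
    using H by (auto simp: Mk_def Hk_def)
  let ?F = "kall (fst H) k"
  have finF: "finite ?F" using kg finite_kall by (simp add: kgraph_def)
  have sub: "snd H \<subseteq> ?F" using kg by (simp add: kgraph_kall)
  have kgF: "kgraph k (fst H, ?F)" using kg by (simp add: kgraph_kall)
  have "s \<le> mu ?F" using mu_mono[OF finF sub] kg by simp
  moreover have "mu ?F \<le> s"
  proof (rule mu_le[OF finF])
    fix M assume "is_matching ?F M"
    then have "card M * k \<le> n" using match_card_bound[OF kgF] kg by simp
    then have "card M * k < (s + 1) * k" using lt by (simp add: mult.commute)
    then have "card M < s + 1" using mult_less_cancel2[of "card M" k "s+1"] by simp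
    then show "card M \<le> s" by simp
  qed
  ultimately have "(fst H, ?F) \<in> Hk k n s" using kgF kg by (simp add: Hk_def)
  then have "card ?F \<le> card (snd H)" using Hk_le_mu_k kg by fastforce
  then show ?thesis using card_seteq[OF finF sub] by simp
qed


lemma timg_subset: "tau i j ` x \<subseteq> Y \<longleftrightarrow> x \<subseteq> tau i j ` Y"
  by (auto simp: mem_timg)

lemma timg_disj: "tau i j ` x \<inter> Y = {} \<longleftrightarrow> x \<inter> tau i j ` Y = {}"
  by (auto simp: mem_timg)

lemma recon_cases:
  assumes ij: "i \<noteq> j"
    and key: "\<not> (\<exists>f g. i \<in> f \<and> j \<notin> f \<and> f \<in> snd (shift i j H) \<and> tau i j ` f \<notin> snd (shift i j H) \<and> f \<in> snd H
        \<and> i \<in> g \<and> j \<notin> g \<and> g \<in> snd (shift i j H) \<and> tau i j ` g \<notin> snd (shift i j H) \<and> g \<notin> snd H)"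
  shows "snd H = snd (shift i j H) \<or> snd H = (`) (tau i j) ` snd (shift i j H)"
proof (cases "\<exists>g. i \<in> g \<and> j \<notin> g \<and> g \<in> snd (shift i j H) \<and> tau i j ` g \<notin> snd (shift i j H) \<and> g \<notin> snd H")
  case True
  then have "\<And>f. i \<in> f \<Longrightarrow> j \<notin> f \<Longrightarrow> f \<in> snd (shift i j H) \<Longrightarrow> tau i j ` f \<notin> snd (shift i j H) \<Longrightarrow> f \<notin> snd H"
    using key by blast
  then show ?thesis using recon2[OF ij] by blast
next
  case False
  then have "\<And>f. i \<in> f \<Longrightarrow> j \<notin> f \<Longrightarrow> f \<in> snd (shift i j H) \<Longrightarrow> tau i j ` f \<notin> snd (shift i j H) \<Longrightarrow> f \<in> snd H"
    by blast
  then show ?thesis using recon[OF ij] by blast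
qed

lemma arith_cov1:
  fixes k s n :: nat
  assumes "k * (s + 1) \<le> n" "s \<ge> 1" "k \<ge> 1"
  shows "(s - 1) * (k - 1) \<le> n - s - 1 - 2 * (k - 1)"
proof -
  obtain a where a: "s = Suc a" using assms(2) by (cases s) auto
  obtain b where b: "k = Suc b" using assms(3) by (cases k) auto
  have "k * (s + 1) = b * a + 2 * b + a + 2" using a b by (simp add: algebra_simps)
  moreover have "(s - 1) * (k - 1) = b * a" using a b by (simp add: algebra_simps)
  moreover have "n - s - 1 - 2 * (k - 1) = n - a - 2 - 2 * b" using a b by simp
  ultimately show ?thesis using assms(1) by linarith
qed

lemma arith_cov2:
  fixes k s n :: nat
  assumes "k * (s + 1) \<le> n" "s \<ge> 1" "k \<ge> 2" "n \<noteq> 2 * k"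
  shows "2 * (k - 1) + 1 \<le> n - s - 1"
proof -
  obtain a where a: "s = Suc a" using assms(2) by (cases s) auto
  obtain b where b: "k = Suc b" using assms(3) by (cases k) auto
  have h: "k * (s + 1) = b * a + 2 * b + a + 2" using a b by (simp add: algebra_simps)
  have b1: "b \<ge> 1" using b assms(3) by simp
  show ?thesis
  proof (cases a)
    case 0
    then show ?thesis using h a b assms by simp
  next
    case (Suc c)
    have "b * a \<ge> b * 1" using Suc by (intro mult_le_mono2) simp
    then show ?thesis using h a b b1 assms(1) by linarith
  qed
qed

lemma arith_cl1:
  fixes k s :: nat
  assumes "s \<ge> 1" "k \<ge> 1"
  shows "(s - 1) * k \<le> k * s + k - 1 - 1 - 2 * (k - 1)"
proof -
  obtain a where a: "s = Suc a" using assms(1) by (cases s) auto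
  obtain b where b: "k = Suc b" using assms(2) by (cases k) auto
  have "k * s + k - 1 - 1 - 2 * (k - 1) = b * a + a" using a b by (simp add: algebra_simps)
  moreover have "(s - 1) * k = b * a + a" using a b by (simp add: algebra_simps)
  ultimately show ?thesis by simp
qed

lemma arith_cl2:
  fixes k s :: nat
  assumes "s \<ge> 2" "k \<ge> 1"
  shows "2 * (k - 1) + 1 \<le> k * s + k - 1 - 1"
proof -
  obtain a where a: "s = a + 2" using assms(1) le_Suc_ex by (metis add.commute)
  obtain b where b: "k = Suc b" using assms(2) by (cases k) auto
  have "k * s + k - 1 - 1 = b * a + a + 3 * b + 1" using a b by (simp add: algebra_simps)
  then show ?thesis using b by simp
qed


lemma card_insert_k:
  assumes "finite D" "card D = k - 1" "i \<notin> D" "k \<ge> 1"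
  shows "card (insert i D) = k"
  using assms by simp

lemma rev_Cov:
  assumes H: "H \<in> Mk k n s" and ij: "i \<in> fst H" "j \<in> fst H" "i \<noteq> j"
    and C: "shift i j H \<in> Cov k n s" and n2k: "n \<noteq> 2 * k"
  shows "H \<in> Cov k n s"
proof -
  define V where "V = fst H"
  define E where "E = snd H"
  define E' where "E' = snd (shift i j H)"
  have kg: "kgraph k H" "card V = n" "mu E = s" and finV: "finite V"
    using H by (auto simp: Mk_def Hk_def V_def E_def kgraph_def)
  have finE: "finite E" using kgraph_finite kg E_def by blast
  have iV: "i \<in> V" "j \<in> V" using ij V_def by auto
  obtain S where S: "S \<subseteq> V" "card S = s" "E' = {e. e \<subseteq> V \<and> card e = k \<and> e \<inter> S \<noteq> {}}"
    using C by (auto simp: Cov_def V_def E'_def)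
  have finS: "finite S" using S finV finite_subset by blast
  have cE: "\<And>e. e \<in> E \<Longrightarrow> e \<subseteq> V \<and> card e = k" using kg by (auto simp: kgraph_def V_def E_def)
  have chr: "\<And>f. f \<in> E' \<longleftrightarrow>
    (if i \<in> f \<and> j \<notin> f then f \<in> E \<or> tau i j ` f \<in> E
     else if j \<in> f \<and> i \<notin> f then f \<in> E \<and> tau i j ` f \<in> E
     else f \<in> E)" unfolding E_def E'_def by (rule char[OF ij(3)])
  have key: "\<not> (\<exists>f g. i \<in> f \<and> j \<notin> f \<and> f \<in> E' \<and> tau i j ` f \<notin> E' \<and> f \<in> E
        \<and> i \<in> g \<and> j \<notin> g \<and> g \<in> E' \<and> tau i j ` g \<notin> E' \<and> g \<notin> E)"
  proof
    assume "\<exists>f g. i \<in> f \<and> j \<notin> f \<and> f \<in> E' \<and> tau i j ` f \<notin> E' \<and> f \<in> E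
        \<and> i \<in> g \<and> j \<notin> g \<and> g \<in> E' \<and> tau i j ` g \<notin> E' \<and> g \<notin> E"
    then obtain f g where f: "i \<in> f" "j \<notin> f" "f \<in> E'" "tau i j ` f \<notin> E'" "f \<in> E"
      and g: "i \<in> g" "j \<notin> g" "g \<in> E'" "tau i j ` g \<notin> E'" "g \<notin> E" by blast
    have fV: "f \<subseteq> V" "card f = k" "f \<inter> S \<noteq> {}" using f S by auto
    have finf: "finite f" using fV finV finite_subset by blast
    have k1: "k \<ge> 1" using fV f finf by (metis One_nat_def Suc_leI card_gt_0_iff empty_iff)
    have tf: "tau i j ` f = insert j (f - {i})" using timg_i f by metis
    have "tau i j ` f \<subseteq> V" using fV by (simp add: timg_subset timg_V[OF iV])
    moreover have "card (tau i j ` f) = k" using fV by simp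
    ultimately have "tau i j ` f \<inter> S = {}" using f(4) S(3) by blast
    then have jS: "j \<notin> S" and fS: "(f - {i}) \<inter> S = {}" using tf by auto
    then have iS: "i \<in> S" using fV by auto
    have s1: "s \<ge> 1" using iS S finS by (metis One_nat_def Suc_leI card_gt_0_iff empty_iff)
    show False
    proof (cases "n < k * (s + 1)")
      case True
      have "E = kall V k" using Mk_complete[OF H True] by (simp add: E_def V_def)
      moreover have "g \<in> kall V k" using g S by (auto simp: kall_def)
      ultimately show False using g by simp
    next
      case False
      then have nge: "k * (s + 1) \<le> n" by simp
      define U where "U = V - S - {j}"
      have finU: "finite U" using finV U_def by simp
      have "card (V - S) = n - s" using S finS kg by (simp add: card_Diff_subset)
      moreover have "j \<in> V - S" using iV jS by simp
      ultimately have cU: "card U = n - s - 1" unfolding U_def using finV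
        by (simp add: card_Diff_singleton_if)
      define Q where "Q C \<longleftrightarrow> insert i C \<in> E" for C
      have prp: "Q D" if CD: "C \<subseteq> U" "D \<subseteq> U" "card C = k - 1" "card D = k - 1" "C \<inter> D = {}" "Q C" for C D
      proof (rule ccontr)
        assume nQ: "\<not> Q D"
        have finC: "finite C" "finite D" using CD finU finite_subset by blast+
        have iD: "i \<notin> D" "i \<notin> C" "j \<notin> D" "j \<notin> C" using CD iS by (auto simp: U_def)
        have ciD: "card (insert i D) = k" using card_insert_k[OF finC(2) CD(4) iD(1) k1] .
        have iDV: "insert i D \<subseteq> V" using CD iV by (auto simp: U_def)
        have iDE: "insert i D \<in> E'" unfolding S(3) using iDV ciD iS by auto
        have "tau i j ` insert i D = insert j (insert i D - {i})" by (rule timg_i) (use iD ij in auto)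
        also have "\<dots> = insert j D" using iD by auto
        finally have tD: "tau i j ` insert i D = insert j D" .
        have "insert i D \<in> E \<or> tau i j ` insert i D \<in> E"
          using chr[of "insert i D"] iDE iD ij by simp
        then have jD: "insert j D \<in> E" using nQ tD by (simp add: Q_def)
        define S' where "S' = S - {i}"
        define R where "R = U - C - D"
        have finS': "finite S'" "finite R" using finS finU by (auto simp: S'_def R_def)
        have cS': "card S' = s - 1" using iS finS S by (simp add: S'_def)
        have "card (C \<union> D) = 2 * (k - 1)" using finC CD by (simp add: card_Un_disjoint)
        moreover have "R = U - (C \<union> D)" by (auto simp: R_def)
        moreover have "card (U - (C \<union> D)) = card U - card (C \<union> D)"
          using CD finC by (intro card_Diff_subset) auto
        ultimately have cR: "card R = card U - 2 * (k - 1)" by simp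
        have "(s - 1) * (k - 1) \<le> card R" using arith_cov1[OF nge s1 k1] cR cU by simp
        then have cc: "card S' * (k - 1) \<le> card R" using cS' by simp
        have SR: "S' \<inter> R = {}" by (auto simp: S'_def R_def U_def)
        obtain M where M: "card M = card S'"
          "\<forall>e\<in>M. e \<subseteq> S' \<union> R \<and> card e = k \<and> e \<inter> S' \<noteq> {}"
          "\<forall>e\<in>M. \<forall>f\<in>M. e \<noteq> f \<longrightarrow> e \<inter> f = {}"
          using cover_matching[OF finS'(1) finS'(2) SR cc k1] by blast
        have ME: "M \<subseteq> E"
        proof
          fix e assume eM: "e \<in> M"
          have e1: "e \<subseteq> S' \<union> R" "card e = k" "e \<inter> S' \<noteq> {}" using bspec[OF M(2) eM] by auto
          have SRV: "S' \<union> R \<subseteq> V" using S by (auto simp: S'_def R_def U_def)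
          have "e \<in> E'" using e1 SRV S(3) by (auto simp: S'_def)
          moreover have "i \<notin> e" "j \<notin> e" using e1(1) jS iS by (auto simp: S'_def R_def U_def)
          ultimately show "e \<in> E" using chr[of e] by simp
        qed
        have disj: "\<forall>e\<in>M. e \<inter> insert i C = {} \<and> e \<inter> insert j D = {}"
        proof
          fix e assume eM: "e \<in> M"
          have "e \<subseteq> S' \<union> R" using bspec[OF M(2) eM] by auto
          then show "e \<inter> insert i C = {} \<and> e \<inter> insert j D = {}"
            using CD jS iS by (auto simp: S'_def R_def U_def)
        qed
        have iC: "insert i C \<in> E" using CD(6) by (simp add: Q_def)
        have dd: "insert i C \<inter> insert j D = {}" using iD ij CD(5) by auto
        have "card M + 2 \<le> mu E"
          using combine[OF finE ME M(3) iC jD _ _ dd disj] by simp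
        then show False using M(1) cS' kg s1 by simp
      qed
      have A1: "f - {i} \<subseteq> U" using fV(1) fS f(2) by (auto simp: U_def)
      have A2: "card (f - {i}) = k - 1" using fV(2) f(1) finf by simp
      have "insert i (f - {i}) = f" using f(1) by (rule insert_Diff)
      then have A3: "Q (f - {i})" using f(5) by (simp add: Q_def)
      have gV: "g \<subseteq> V" "card g = k" using g S by auto
      have fing: "finite g" using gV finV finite_subset by blast
      have "tau i j ` g \<subseteq> V" using gV by (simp add: timg_subset timg_V[OF iV])
      moreover have "card (tau i j ` g) = k" using gV by simp
      ultimately have "tau i j ` g \<inter> S = {}" using g(4) S(3) by blast
      then have gS: "(g - {i}) \<inter> S = {}" using timg_i[of i g j] g by auto
      have B1: "g - {i} \<subseteq> U" using gV(1) gS g(2) by (auto simp: U_def)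
      have B2: "card (g - {i}) = k - 1" using gV(2) g(1) fing by simp
      have "insert i (g - {i}) = g" using g(1) by (rule insert_Diff)
      then have B3: "\<not> Q (g - {i})" using g(5) by (simp add: Q_def)
      have kn: "k - 1 = 0 \<or> 2 * (k - 1) + 1 \<le> card U"
      proof (cases "k \<ge> 2")
        case True
        then show ?thesis using arith_cov2[OF nge s1 True n2k] cU by simp
      qed simp
      have "Q (g - {i})"
        by (rule kneser[OF finU kn, of Q, OF prp A1 B1 A2 B2 A3])
      then show False using B3 by simp
    qed
  qed
  have "E = E' \<or> E = (`) (tau i j) ` E'"
    using recon_cases[OF ij(3)] key unfolding E_def E'_def by blast
  then show ?thesis
  proof
    assume "E = E'"
    then show ?thesis using S kg finV by (auto simp: Cov_def V_def E_def)
  next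
    assume EE: "E = (`) (tau i j) ` E'"
    have "E = {e. e \<subseteq> V \<and> card e = k \<and> e \<inter> tau i j ` S \<noteq> {}}"
    proof (intro set_eqI)
      fix x
      have "x \<in> E \<longleftrightarrow> tau i j ` x \<in> E'" unfolding EE by (rule mem_timgs)
      also have "\<dots> \<longleftrightarrow> tau i j ` x \<subseteq> V \<and> card (tau i j ` x) = k \<and> tau i j ` x \<inter> S \<noteq> {}"
        using S(3) by simp
      also have "\<dots> \<longleftrightarrow> x \<subseteq> V \<and> card x = k \<and> x \<inter> tau i j ` S \<noteq> {}"
        by (simp only: timg_subset timg_V[OF iV] card_timg timg_disj)
      finally show "x \<in> E \<longleftrightarrow> x \<in> {e. e \<subseteq> V \<and> card e = k \<and> e \<inter> tau i j ` S \<noteq> {}}" by simp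
    qed
    moreover have "tau i j ` S \<subseteq> V" using S timg_V[OF iV] by auto
    moreover have "card (tau i j ` S) = s" using S by simp
    ultimately show ?thesis using kg finV by (auto simp: Cov_def V_def E_def)
  qed
qed


lemma binom_ineq:
  fixes k n :: nat
  assumes "k \<ge> 2" "n \<ge> 2 * k + 1"
  shows "(2 * k - 1) choose k < (n - 1) choose (k - 1)"
proof -
  obtain b where b: "k = Suc (Suc b)" using assms(1) by (metis add_2_eq_Suc le_Suc_ex)
  define m where "m = 2 * b + 3"
  have m: "2 * k - 1 = m" "k - 1 = Suc b" using b by (simp_all add: m_def)
  have "m choose k = m choose (m - k)" using b by (intro binomial_symmetric) (simp add: m_def)
  also have "m - k = Suc b" using b by (simp add: m_def)
  finally have e1: "m choose k = m choose (Suc b)" .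
  have e2: "(Suc m choose (Suc b)) = (m choose b) + (m choose (Suc b))" by (rule binomial_Suc_Suc)
  have pos: "m choose b > 0" by (simp add: m_def)
  have "Suc m \<le> n - 1" using assms b by (simp add: m_def)
  then have e3: "Suc m choose (Suc b) \<le> (n - 1) choose (Suc b)" by (rule binomial_right_mono)
  have "m choose (Suc b) < (n - 1) choose (Suc b)" using e2 e3 pos by linarith
  then show ?thesis using e1 m by simp
qed

lemma star_contra:
  fixes k n :: nat
  assumes H': "H' \<in> Mk k n 1" and T: "T \<subseteq> fst H'" "card T = 2 * k - 1"
    "snd H' = {e. e \<subseteq> T \<and> card e = k}" and k2: "k \<ge> 2" and n: "n \<ge> 2 * k + 1"
  shows False
proof -
  define V where "V = fst H'"
  have kg: "kgraph k H'" "card V = n" "card (snd H') = mu_k k n 1" and finV: "finite V"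
    using H' by (auto simp: Mk_def Hk_def V_def kgraph_def)
  have finT: "finite T" using T finV V_def finite_subset by blast
  have cE: "card (snd H') = (2 * k - 1) choose k" using T(2,3) n_subsets[OF finT, of k] by simp
  have "V \<noteq> {}" using kg n by auto
  then obtain v where v: "v \<in> V" by blast
  define BB where "BB = {B. B \<subseteq> V - {v} \<and> card B = k - 1}"
  define St where "St = insert v ` BB"
  have cVv: "card (V - {v}) = n - 1" using kg v finV by simp
  have inj: "inj_on (insert v) BB"
  proof
    fix B1 B2 assume "B1 \<in> BB" "B2 \<in> BB" "insert v B1 = insert v B2"
    then have "insert v B1 - {v} = insert v B2 - {v}" "v \<notin> B1" "v \<notin> B2" by (auto simp: BB_def)
    then show "B1 = B2" by simp
  qed
  have cSt: "card St = (n - 1) choose (k - 1)"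
    unfolding St_def using card_image[OF inj] n_subsets[of "V - {v}" "k - 1"] finV cVv
    by (simp add: BB_def)
  have Stk: "St \<subseteq> kall V k"
  proof
    fix e assume "e \<in> St"
    then obtain B where B: "B \<subseteq> V - {v}" "card B = k - 1" "e = insert v B" by (auto simp: St_def BB_def)
    have "finite B" using B finV finite_subset by blast
    moreover have "v \<notin> B" using B by auto
    ultimately have "card e = k" using B k2 by simp
    then show "e \<in> kall V k" using B v by (auto simp: kall_def)
  qed
  have finSt: "finite St" using finite_subset[OF Stk finite_kall[OF finV]] .
  have vSt: "\<forall>e\<in>St. v \<in> e" by (auto simp: St_def)
  have mu1: "mu St = 1"
  proof (rule antisym)
    show "mu St \<le> 1"
    proof (rule mu_le[OF finSt])
      fix M assume M: "is_matching St M"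
      have finM: "finite M" using M finSt by (auto simp: is_matching_def intro: finite_subset)
      have "\<forall>a1\<in>M. \<forall>a2\<in>M. a1 = a2"
      proof (intro ballI)
        fix a1 a2 assume a: "a1 \<in> M" "a2 \<in> M"
        then have "v \<in> a1" "v \<in> a2" using M vSt by (auto simp: is_matching_def)
        then show "a1 = a2" using M a by (auto simp: is_matching_def)
      qed
      then show "card M \<le> 1" using card_le_Suc0_iff_eq[OF finM] by simp
    qed
  next
    have "k - 1 \<le> card (V - {v})" using cVv n by simp
    then obtain B where B: "B \<subseteq> V - {v}" "card B = k - 1" using obtain_subset_with_card_n by metis
    then have "insert v B \<in> St" by (auto simp: St_def BB_def)
    then have "is_matching St {insert v B}" by (simp add: is_matching_def)
    then have "card {insert v B} \<le> mu St" by (rule mu_ge[OF finSt])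
    then show "1 \<le> mu St" by simp
  qed
  have "(V, St) \<in> Hk k n 1" using Stk finV kg mu1 by (simp add: Hk_def kgraph_kall)
  then have "card St \<le> mu_k k n 1" using Hk_le_mu_k by fastforce
  then have "(n - 1) choose (k - 1) \<le> (2 * k - 1) choose k" using cSt cE kg by simp
  then show False using binom_ineq[OF k2 n] by simp
qed


lemma rev_Cl:
  assumes H: "H \<in> Mk k n s" and ij: "i \<in> fst H" "j \<in> fst H" "i \<noteq> j"
    and C: "shift i j H \<in> Cl k n s" and n2k: "n \<noteq> 2 * k"
  shows "H \<in> Cl k n s"
proof -
  define V where "V = fst H"
  define E where "E = snd H"
  define E' where "E' = snd (shift i j H)"
  have kg: "kgraph k H" "card V = n" "mu E = s" and finV: "finite V"
    using H by (auto simp: Mk_def Hk_def V_def E_def kgraph_def)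
  have H': "shift i j H \<in> Mk k n s" using step_Mk[OF H ij] .
  have finE: "finite E" using kgraph_finite kg E_def by blast
  have iV: "i \<in> V" "j \<in> V" using ij V_def by auto
  obtain T where T: "T \<subseteq> V" "card T = k * s + k - 1" "E' = {e. e \<subseteq> T \<and> card e = k}"
    using C by (auto simp: Cl_def V_def E'_def)
  have finT: "finite T" using T finV finite_subset by blast
  have chr: "\<And>f. f \<in> E' \<longleftrightarrow>
    (if i \<in> f \<and> j \<notin> f then f \<in> E \<or> tau i j ` f \<in> E
     else if j \<in> f \<and> i \<notin> f then f \<in> E \<and> tau i j ` f \<in> E
     else f \<in> E)" unfolding E_def E'_def by (rule char[OF ij(3)])
  have key: "\<not> (\<exists>f g. i \<in> f \<and> j \<notin> f \<and> f \<in> E' \<and> tau i j ` f \<notin> E' \<and> f \<in> E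
        \<and> i \<in> g \<and> j \<notin> g \<and> g \<in> E' \<and> tau i j ` g \<notin> E' \<and> g \<notin> E)"
  proof
    assume "\<exists>f g. i \<in> f \<and> j \<notin> f \<and> f \<in> E' \<and> tau i j ` f \<notin> E' \<and> f \<in> E
        \<and> i \<in> g \<and> j \<notin> g \<and> g \<in> E' \<and> tau i j ` g \<notin> E' \<and> g \<notin> E"
    then obtain f g where f: "i \<in> f" "j \<notin> f" "f \<in> E'" "tau i j ` f \<notin> E'" "f \<in> E"
      and g: "i \<in> g" "j \<notin> g" "g \<in> E'" "tau i j ` g \<notin> E'" "g \<notin> E" by blast
    have fT: "f \<subseteq> T" "card f = k" using f T by auto
    have finf: "finite f" using fT finT finite_subset by blast
    have k1: "k \<ge> 1" using fT f finf by (metis One_nat_def Suc_leI card_gt_0_iff empty_iff)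
    have tf: "tau i j ` f = insert j (f - {i})" using timg_i f by metis
    have "card (tau i j ` f) = k" using fT by simp
    then have "\<not> tau i j ` f \<subseteq> T" using f(4) T(3) by blast
    then have jT: "j \<notin> T" using tf fT by auto
    have iT: "i \<in> T" using fT f by auto
    have "k \<le> card T" using fT finT card_mono by metis
    then have s1: "s \<ge> 1" using T(2) k1 by (cases s) auto
    have jn: "n \<ge> 2 * k + 1"
    proof -
      have "T \<subset> V" using T jT iV by auto
      then have "card T < n" using finV kg psubset_card_mono by metis
      then have "k * s + k \<le> n" using T(2) k1 by linarith
      moreover have "2 * k \<le> k * s + k" using s1 by simp
      ultimately show ?thesis using n2k by linarith
    qed
    define U where "U = T - {i}"
    have finU: "finite U" using finT U_def by simp
    have cU: "card U = k * s + k - 1 - 1" using T(2) iT finT by (simp add: U_def)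
    define Q where "Q C \<longleftrightarrow> insert i C \<in> E" for C
    have prp: "Q D" if CD: "C \<subseteq> U" "D \<subseteq> U" "card C = k - 1" "card D = k - 1" "C \<inter> D = {}" "Q C" for C D
    proof (rule ccontr)
      assume nQ: "\<not> Q D"
      have finC: "finite C" "finite D" using CD finU finite_subset by blast+
      have iD: "i \<notin> D" "i \<notin> C" "j \<notin> D" "j \<notin> C" using CD jT by (auto simp: U_def)
      have ciD: "card (insert i D) = k" using card_insert_k[OF finC(2) CD(4) iD(1) k1] .
      have iDT: "insert i D \<subseteq> T" using CD iT by (auto simp: U_def)
      have iDE: "insert i D \<in> E'" unfolding T(3) using iDT ciD by auto
      have "tau i j ` insert i D = insert j (insert i D - {i})" by (rule timg_i) (use iD ij in auto)
      also have "\<dots> = insert j D" using iD by auto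
      finally have tD: "tau i j ` insert i D = insert j D" .
      have "insert i D \<in> E \<or> tau i j ` insert i D \<in> E"
        using chr[of "insert i D"] iDE iD ij by simp
      then have jD: "insert j D \<in> E" using nQ tD by (simp add: Q_def)
      define R where "R = U - C - D"
      have finR: "finite R" using finU by (simp add: R_def)
      have "card (C \<union> D) = 2 * (k - 1)" using finC CD by (simp add: card_Un_disjoint)
      moreover have "R = U - (C \<union> D)" by (auto simp: R_def)
      moreover have "card (U - (C \<union> D)) = card U - card (C \<union> D)"
        using CD finC by (intro card_Diff_subset) auto
      ultimately have cR: "card R = card U - 2 * (k - 1)" by simp
      have cc: "(s - 1) * k \<le> card R" using arith_cl1[OF s1 k1] cR cU by simp
      obtain M where M: "card M = s - 1" "\<forall>e\<in>M. e \<subseteq> R \<and> card e = k"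
          "\<forall>e\<in>M. \<forall>f\<in>M. e \<noteq> f \<longrightarrow> e \<inter> f = {}"
        using part_matching[OF finR cc k1] by blast
      have ME: "M \<subseteq> E"
      proof
        fix e assume eM: "e \<in> M"
        have e1: "e \<subseteq> R" "card e = k" using bspec[OF M(2) eM] by auto
        have "R \<subseteq> T" by (auto simp: R_def U_def)
        then have "e \<in> E'" using e1 T(3) by auto
        moreover have "i \<notin> e" "j \<notin> e" using e1(1) jT by (auto simp: R_def U_def)
        ultimately show "e \<in> E" using chr[of e] by simp
      qed
      have disj: "\<forall>e\<in>M. e \<inter> insert i C = {} \<and> e \<inter> insert j D = {}"
      proof
        fix e assume eM: "e \<in> M"
        have "e \<subseteq> R" using bspec[OF M(2) eM] by auto
        then show "e \<inter> insert i C = {} \<and> e \<inter> insert j D = {}"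
          using CD jT by (auto simp: R_def U_def)
      qed
      have iC: "insert i C \<in> E" using CD(6) by (simp add: Q_def)
      have dd: "insert i C \<inter> insert j D = {}" using iD ij CD(5) by auto
      have "card M + 2 \<le> mu E"
        using combine[OF finE ME M(3) iC jD _ _ dd disj] by simp
      then show False using M(1) kg s1 by simp
    qed
    have A1: "f - {i} \<subseteq> U" using fT(1) by (auto simp: U_def)
    have A2: "card (f - {i}) = k - 1" using fT(2) f(1) finf by simp
    have "insert i (f - {i}) = f" using f(1) by (rule insert_Diff)
    then have A3: "Q (f - {i})" using f(5) by (simp add: Q_def)
    have gT: "g \<subseteq> T" "card g = k" using g T by auto
    have fing: "finite g" using gT finT finite_subset by blast
    have B1: "g - {i} \<subseteq> U" using gT(1) by (auto simp: U_def)
    have B2: "card (g - {i}) = k - 1" using gT(2) g(1) fing by simp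
    have "insert i (g - {i}) = g" using g(1) by (rule insert_Diff)
    then have B3: "\<not> Q (g - {i})" using g(5) by (simp add: Q_def)
    show False
    proof (cases "k \<ge> 2 \<and> s = 1")
      case True
      have Ts: "card T = 2 * k - 1" using T(2) True by simp
      have "E' = snd (shift i j H)" by (simp add: E'_def)
      then show False using star_contra[of "shift i j H" k n T] H' True T Ts jn
        by (simp add: V_def E'_def)
    next
      case False
      have kn: "k - 1 = 0 \<or> 2 * (k - 1) + 1 \<le> card U"
      proof (cases "k \<ge> 2")
        case True
        then have "s \<ge> 2" using False s1 by simp
        then show ?thesis using arith_cl2[OF _ k1] cU by simp
      qed simp
      have "Q (g - {i})"
        by (rule kneser[OF finU kn, of Q, OF prp A1 B1 A2 B2 A3])
      then show False using B3 by simp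
    qed
  qed
  have "E = E' \<or> E = (`) (tau i j) ` E'"
    using recon_cases[OF ij(3)] key unfolding E_def E'_def by blast
  then show ?thesis
  proof
    assume "E = E'"
    then show ?thesis using T kg finV by (auto simp: Cl_def V_def E_def)
  next
    assume EE: "E = (`) (tau i j) ` E'"
    have "E = {e. e \<subseteq> tau i j ` T \<and> card e = k}"
    proof (intro set_eqI)
      fix x
      have "x \<in> E \<longleftrightarrow> tau i j ` x \<in> E'" unfolding EE by (rule mem_timgs)
      also have "\<dots> \<longleftrightarrow> tau i j ` x \<subseteq> T \<and> card (tau i j ` x) = k"
        using T(3) by simp
      also have "\<dots> \<longleftrightarrow> x \<subseteq> tau i j ` T \<and> card x = k"
        by (simp only: timg_subset card_timg)
      finally show "x \<in> E \<longleftrightarrow> x \<in> {e. e \<subseteq> tau i j ` T \<and> card e = k}" by simp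
    qed
    moreover have "tau i j ` T \<subseteq> V" using T(1) timg_V[OF iV] by auto
    moreover have "card (tau i j ` T) = k * s + k - 1" using T by simp
    ultimately show ?thesis using kg finV by (auto simp: Cl_def V_def E_def)
  qed
qed


lemma shifts_Cov:
  "H \<in> Mk k n s \<Longrightarrow> \<forall>(i, j) \<in> set ps. i < j \<and> i \<in> fst H \<and> j \<in> fst H \<Longrightarrow> n \<noteq> 2 * k
   \<Longrightarrow> shifts ps H \<in> Cov k n s \<Longrightarrow> H \<in> Cov k n s"
proof (induction ps arbitrary: H)
  case Nil
  then show ?case by (simp add: shifts_def)
next
  case (Cons p ps)
  obtain a b where p: "p = (a, b)" by force
  have ab: "a \<in> fst H" "b \<in> fst H" "a \<noteq> b" using Cons.prems p by auto
  have M': "shift a b H \<in> Mk k n s" using step_Mk[OF Cons.prems(1) ab] .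
  have "shift a b H \<in> Cov k n s" using Cons.IH[OF M'] Cons.prems p by (simp add: shifts_Cons)
  then show ?case using rev_Cov[OF Cons.prems(1) ab _ Cons.prems(3)] by blast
qed

lemma shifts_Cl:
  "H \<in> Mk k n s \<Longrightarrow> \<forall>(i, j) \<in> set ps. i < j \<and> i \<in> fst H \<and> j \<in> fst H \<Longrightarrow> n \<noteq> 2 * k
   \<Longrightarrow> shifts ps H \<in> Cl k n s \<Longrightarrow> H \<in> Cl k n s"
proof (induction ps arbitrary: H)
  case Nil
  then show ?case by (simp add: shifts_def)
next
  case (Cons p ps)
  obtain a b where p: "p = (a, b)" by force
  have ab: "a \<in> fst H" "b \<in> fst H" "a \<noteq> b" using Cons.prems p by auto
  have M': "shift a b H \<in> Mk k n s" using step_Mk[OF Cons.prems(1) ab] .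
  have "shift a b H \<in> Cl k n s" using Cons.IH[OF M'] Cons.prems p by (simp add: shifts_Cons)
  then show ?case using rev_Cl[OF Cons.prems(1) ab _ Cons.prems(3)] by blast
qed

theorem lemma6:
  fixes k n s :: nat and G Sh :: hgraph and ps :: "(nat \<times> nat) list"
  assumes "G \<in> Mk k n s"
    and "\<forall>(i, j) \<in> set ps. i < j \<and> i \<in> fst G \<and> j \<in> fst G"
    and "Sh = shifts ps G"
    and "\<forall>i \<in> fst G. \<forall>j \<in> fst G. i < j \<longrightarrow> shift i j Sh = Sh"
  shows "Sh \<in> Mk k n s
    \<and> (n \<noteq> 2 * k \<and> Sh \<in> Cov k n s \<longrightarrow> G \<in> Cov k n s)
    \<and> (n \<noteq> 2 * k \<and> Sh \<in> Cl k n s \<longrightarrow> G \<in> Cl k n s)"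
  using shifts_Mk[OF assms(1,2)] shifts_Cov[OF assms(1,2)] shifts_Cl[OF assms(1,2)] assms(3)
  by blast

end
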